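(* Let $A\in\mathbb{R}^{m\times n}$ with $\operatorname{rk}(A)=m$ and $b\in\mathbb{R}^m$, and let $x$ be a basic (not necessarily nonnegative) solution of $Ax=b$, i.e. $Ax=b$ and $x_{[n]\setminus B}=\mathbb{0}$ for some $B\subseteq[n]$ such that the columns of $A_B$ form a basis. Then for every $z\in\mathbb{R}^n$ with $Az=b$, $\|x\|_\infty\le\kappa_A\|z\|_1$.
   Context: An elementary vector of $\ker(A)$ is a nonzero $g\in\ker(A)$ with inclusion-minimal support among nonzero vectors of $\ker(A)$. The circuit imbalance is $\kappa_A=\max\{|g_i|/|g_j|: g \text{ elementary},\ i,j\in\mathrm{supp}(g)\}$. *)

theory Defs
  imports "HOL-Analysis.Analysis"
begin

definition ker_mat :: "real^'n^'m \<Rightarrow> (real^'n) set" where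
  "ker_mat A = {g. A *v g = 0}"

definition supp_vec :: "real^'n \<Rightarrow> 'n set" where
  "supp_vec g = {i. g $ i \<noteq> 0}"

definition elementary :: "real^'n^'m \<Rightarrow> real^'n \<Rightarrow> bool" where
  "elementary A g \<longleftrightarrow> g \<in> ker_mat A \<and> g \<noteq> 0 \<and>
     (\<forall>h \<in> ker_mat A. h \<noteq> 0 \<longrightarrow> \<not> (supp_vec h \<subset> supp_vec g))"

text \<open>Circuit imbalance measure. Ratios with i = j equal 1, so adding 1 to the
  set only matters when there are no elementary vectors (ker A = 0), where we
  use the convention kappa = 1.\<close>
definition circuit_imbalance :: "real^'n^'m \<Rightarrow> real" where
  "circuit_imbalance A = Sup ({1} \<union>
     {\<bar>g $ i\<bar> / \<bar>g $ j\<bar> | g i j. elementary A g \<and> i \<in> supp_vec g \<and> j \<in> supp_vec g})"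

definition norm_inf :: "real^'n \<Rightarrow> real" where
  "norm_inf x = Max (range (\<lambda>i. \<bar>x $ i\<bar>))"

definition norm_one :: "real^'n \<Rightarrow> real" where
  "norm_one x = (\<Sum>i\<in>UNIV. \<bar>x $ i\<bar>)"

definition basic_solution :: "real^'n^'m \<Rightarrow> real^'m \<Rightarrow> real^'n \<Rightarrow> bool" where
  "basic_solution A b x \<longleftrightarrow> A *v x = b \<and>
     (\<exists>B. inj_on (\<lambda>j. column j A) B \<and>
          independent ((\<lambda>j. column j A) ` B) \<and>
          span ((\<lambda>j. column j A) ` B) = UNIV \<and>
          (\<forall>j. j \<notin> B \<longrightarrow> x $ j = 0))"

end

theory Submission
  imports Defs
begin

lemma surj_on_B:
  fixes A :: "real^'n^'m" and B :: "'n set"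
  assumes inj: "inj_on (\<lambda>j. column j A) B"
    and sp: "span ((\<lambda>j. column j A) ` B) = UNIV"
  shows "\<exists>w. (\<forall>i. i \<notin> B \<longrightarrow> w $ i = 0) \<and> A *v w = y"
proof -
  have fin: "finite ((\<lambda>j. column j A) ` B)" by simp
  have "y \<in> span ((\<lambda>j. column j A) ` B)" using sp by simp
  then obtain u where u: "y = (\<Sum>v\<in>(\<lambda>j. column j A) ` B. u v *\<^sub>R v)"
    using span_finite[OF fin] by auto
  define w :: "real^'n" where "w = (\<chi> i. if i \<in> B then u (column i A) else 0)"
  have "A *v w = (\<Sum>i\<in>UNIV. w $ i *\<^sub>R column i A)"
    by (simp add: matrix_mult_sum scalar_mult_eq_scaleR)
  also have "\<dots> = (\<Sum>i\<in>B. u (column i A) *\<^sub>R column i A)"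
    by (rule sum.mono_neutral_cong_right) (auto simp: w_def)
  also have "\<dots> = y" using u sum.reindex[OF inj, of "\<lambda>v. u v *\<^sub>R v"] by simp
  finally show ?thesis by (intro exI[of _ w]) (auto simp: w_def)
qed

lemma inj_on_B:
  fixes A :: "real^'n^'m" and B :: "'n set"
  assumes inj: "inj_on (\<lambda>j. column j A) B"
    and ind: "independent ((\<lambda>j. column j A) ` B)"
    and h0: "A *v h = 0" and hB: "\<forall>i. i \<notin> B \<longrightarrow> h $ i = 0"
  shows "h = 0"
proof (rule ccontr)
  assume "h \<noteq> 0"
  then obtain k where hk: "h $ k \<noteq> 0" by (metis vec_eq_iff zero_index)
  with hB have kB: "k \<in> B" by auto
  define u where "u v = h $ (the_inv_into B (\<lambda>j. column j A) v)" for v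
  have fin: "finite ((\<lambda>j. column j A) ` B)" by simp
  have "(\<Sum>v\<in>(\<lambda>j. column j A) ` B. u v *\<^sub>R v) = (\<Sum>i\<in>B. u (column i A) *\<^sub>R column i A)"
    using sum.reindex[OF inj, of "\<lambda>v. u v *\<^sub>R v"] by simp
  also have "\<dots> = (\<Sum>i\<in>B. h $ i *\<^sub>R column i A)"
    by (rule sum.cong) (auto simp: u_def the_inv_into_f_f[OF inj])
  also have "\<dots> = (\<Sum>i\<in>UNIV. h $ i *\<^sub>R column i A)"
    by (rule sum.mono_neutral_cong_left) (use hB in auto)
  also have "\<dots> = 0" using h0 by (simp add: matrix_mult_sum scalar_mult_eq_scaleR)
  finally have "(\<Sum>v\<in>(\<lambda>j. column j A) ` B. u v *\<^sub>R v) = 0" .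
  moreover have "u (column k A) \<noteq> 0" using hk kB by (simp add: u_def the_inv_into_f_f[OF inj])
  ultimately have "dependent ((\<lambda>j. column j A) ` B)"
    using dependent_finite[OF fin] kB by blast
  with ind show False by simp
qed

lemma elem_prop:
  fixes A :: "real^'n^'m"
  assumes "elementary A g" "elementary A g'" "supp_vec g = supp_vec g'"
  shows "\<exists>c. g' = c *s g"
proof -
  have "g \<noteq> 0" using assms(1) by (simp add: elementary_def)
  then obtain i where gi: "g $ i \<noteq> 0" by (metis vec_eq_iff zero_index)
  define h where "h = g' $ i *s g - g $ i *s g'"
  have hk: "h \<in> ker_mat A" using assms(1,2)
    by (simp add: h_def elementary_def ker_mat_def matrix_vector_mult_diff_distrib
        vec.scale)
  have gg: "g' $ k = 0" if "g $ k = 0" for k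
  proof -
    have "k \<notin> supp_vec g" using that by (simp add: supp_vec_def)
    hence "k \<notin> supp_vec g'" using assms(3) by blast
    thus ?thesis by (simp add: supp_vec_def)
  qed
  have "supp_vec h \<subseteq> supp_vec g"
  proof
    fix k assume "k \<in> supp_vec h"
    hence "h $ k \<noteq> 0" by (simp add: supp_vec_def)
    hence "g $ k \<noteq> 0" using gg[of k] by (auto simp: h_def)
    thus "k \<in> supp_vec g" by (simp add: supp_vec_def)
  qed
  moreover have "i \<notin> supp_vec h" by (simp add: supp_vec_def h_def)
  moreover have "i \<in> supp_vec g" using gi by (simp add: supp_vec_def)
  ultimately have "supp_vec h \<subset> supp_vec g" by blast
  hence "h = 0" using assms(1) hk unfolding elementary_def by blast
  hence "\<forall>k. g' $ i * g $ k - g $ i * g' $ k = 0" by (simp add: h_def vec_eq_iff)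
  hence "g' = (g' $ i / g $ i) *s g" using gi
    by (auto simp: vec_eq_iff field_simps)
  thus ?thesis by blast
qed

lemma bdd_kappa:
  fixes A :: "real^'n^'m"
  shows "bdd_above ({1} \<union>
     {\<bar>g $ i\<bar> / \<bar>g $ j\<bar> | g i j. elementary A g \<and> i \<in> supp_vec g \<and> j \<in> supp_vec g})"
proof -
  define rep where "rep S = (SOME g. elementary A g \<and> supp_vec g = S)" for S
  have "{\<bar>g $ i\<bar> / \<bar>g $ j\<bar> | g i j. elementary A g \<and> i \<in> supp_vec g \<and> j \<in> supp_vec g}
     \<subseteq> (\<lambda>(S,i,j). \<bar>rep S $ i\<bar> / \<bar>rep S $ j\<bar>) ` UNIV"
  proof
    fix r assume "r \<in> {\<bar>g $ i\<bar> / \<bar>g $ j\<bar> | g i j. elementary A g \<and> i \<in> supp_vec g \<and> j \<in> supp_vec g}"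
    then obtain g i j where r: "r = \<bar>g $ i\<bar> / \<bar>g $ j\<bar>" and g: "elementary A g" by blast
    have "\<exists>g'. elementary A g' \<and> supp_vec g' = supp_vec g" using g by blast
    hence r0: "elementary A (rep (supp_vec g)) \<and> supp_vec (rep (supp_vec g)) = supp_vec g"
      unfolding rep_def by (rule someI_ex)
    then obtain c where c: "g = c *s rep (supp_vec g)" using elem_prop g by metis
    have "r = \<bar>rep (supp_vec g) $ i\<bar> / \<bar>rep (supp_vec g) $ j\<bar>"
    proof (cases "c = 0")
      case True
      then have "g = 0" using c by simp
      with g show ?thesis by (simp add: elementary_def)
    next
      case False
      define g0 where "g0 = rep (supp_vec g)"
      have gi: "g $ i = c * g0 $ i" "g $ j = c * g0 $ j" using c unfolding g0_def[symmetric]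
        by (metis vector_smult_component)+
      have "r = (\<bar>c\<bar> * \<bar>g0 $ i\<bar>) / (\<bar>c\<bar> * \<bar>g0 $ j\<bar>)" using r gi by (simp add: abs_mult)
      also have "\<dots> = \<bar>g0 $ i\<bar> / \<bar>g0 $ j\<bar>" using False by simp
      finally show ?thesis by (simp add: g0_def)
    qed
    thus "r \<in> (\<lambda>(S,i,j). \<bar>rep S $ i\<bar> / \<bar>rep S $ j\<bar>) ` UNIV"
      by (intro image_eqI[of _ _ "(supp_vec g, i, j)"]) auto
  qed
  moreover have "finite ((\<lambda>(S,i,j). \<bar>rep S $ i\<bar> / \<bar>rep S $ j\<bar>) ` (UNIV :: ('n set \<times> 'n \<times> 'n) set))"
    by simp
  ultimately show ?thesis by (meson bdd_above_finite finite_Un finite_insert finite.emptyI finite_subset insert_is_Un)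
qed

theorem corollary2p8:
  fixes A :: "real^'n^'m" and b :: "real^'m" and x z :: "real^'n"
  assumes "rank A = CARD('m)"
    and "basic_solution A b x"
    and "A *v z = b"
  shows "norm_inf x \<le> circuit_imbalance A * norm_one z"
proof -
  obtain B where Ax: "A *v x = b" and inj: "inj_on (\<lambda>j. column j A) B"
    and ind: "independent ((\<lambda>j. column j A) ` B)"
    and sp: "span ((\<lambda>j. column j A) ` B) = UNIV"
    and xB: "\<forall>j. j \<notin> B \<longrightarrow> x $ j = 0"
    using assms(2) unfolding basic_solution_def by blast
  define K where "K = circuit_imbalance A"
  note bdd = bdd_kappa[of A]
  have K1: "1 \<le> K" unfolding K_def circuit_imbalance_def
    by (rule cSup_upper[OF _ bdd]) simp
  have "\<forall>j. \<exists>g. j \<notin> B \<longrightarrow> (A *v g = 0 \<and> g $ j = 1 \<and> (\<forall>i. i \<notin> B \<longrightarrow> i \<noteq> j \<longrightarrow> g $ i = 0))"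
  proof
    fix j
    obtain w where w: "\<forall>i. i \<notin> B \<longrightarrow> w $ i = 0" "A *v w = column j A"
      using surj_on_B[OF inj sp] by blast
    have "A *v (axis j 1 - w) = 0"
      by (simp add: matrix_vector_mult_diff_distrib matrix_vector_mult_basis w(2))
    moreover have "(axis j 1 - w) $ j = 1" if "j \<notin> B" using w(1) that by simp
    moreover have "(axis j 1 - w) $ i = 0" if "i \<notin> B" "i \<noteq> j" for i
      using w(1) that by (simp add: axis_def)
    ultimately show "\<exists>g. j \<notin> B \<longrightarrow> (A *v g = 0 \<and> g $ j = 1 \<and> (\<forall>i. i \<notin> B \<longrightarrow> i \<noteq> j \<longrightarrow> g $ i = 0))"
      by blast
  qed
  from choice[OF this] obtain G where
    G: "\<forall>j. j \<notin> B \<longrightarrow> (A *v G j = 0 \<and> G j $ j = 1 \<and> (\<forall>i. i \<notin> B \<longrightarrow> i \<noteq> j \<longrightarrow> G j $ i = 0))"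
    by blast
  have G0: "\<And>j. j \<notin> B \<Longrightarrow> A *v G j = 0" using G by blast
  have G1: "\<And>j. j \<notin> B \<Longrightarrow> G j $ j = 1" using G by blast
  have G2: "\<And>j i. j \<notin> B \<Longrightarrow> i \<notin> B \<Longrightarrow> i \<noteq> j \<Longrightarrow> G j $ i = 0" using G by blast
  have Gel: "elementary A (G j)" if j: "j \<notin> B" for j
    unfolding elementary_def
  proof (intro conjI ballI impI)
    show "G j \<in> ker_mat A" using G0[OF j] by (simp add: ker_mat_def)
    show "G j \<noteq> 0" using G1[OF j] by auto
    fix h assume hk: "h \<in> ker_mat A" and hn: "h \<noteq> 0"
    show "\<not> supp_vec h \<subset> supp_vec (G j)"
    proof
      assume sub: "supp_vec h \<subset> supp_vec (G j)"
      define h' where "h' = h - h $ j *s G j"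
      have "A *v h' = 0" using hk G0[OF j]
        by (simp add: h'_def ker_mat_def matrix_vector_mult_diff_distrib vec.scale)
      moreover have "\<forall>i. i \<notin> B \<longrightarrow> h' $ i = 0"
      proof (intro allI impI)
        fix i assume i: "i \<notin> B"
        show "h' $ i = 0"
        proof (cases "i = j")
          case True thus ?thesis using G1[OF j] by (simp add: h'_def)
        next
          case False
          then have "G j $ i = 0" using G2[OF j i] by simp
          then have "h $ i = 0" using sub by (auto simp: supp_vec_def)
          thus ?thesis using \<open>G j $ i = 0\<close> by (simp add: h'_def)
        qed
      qed
      ultimately have "h' = 0" using inj_on_B[OF inj ind] by blast
      hence he: "h = h $ j *s G j" unfolding h'_def by (simp only: right_minus_eq)
      have "h $ j \<noteq> 0"
      proof
        assume "h $ j = 0" with he have "h = 0 *s G j" by metis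
        with hn show False by simp
      qed
      obtain c where c: "c = h $ j" by blast
      have hc: "\<And>i. h $ i = c * G j $ i" using he c by (metis vector_smult_component)
      have "c \<noteq> 0" using \<open>h $ j \<noteq> 0\<close> c by simp
      hence "supp_vec h = supp_vec (G j)"
        unfolding supp_vec_def hc by auto
      with sub show False by simp
    qed
  qed
  have Gb: "\<bar>G j $ k\<bar> \<le> K" if j: "j \<notin> B" for j k
  proof (cases "G j $ k = 0")
    case True thus ?thesis using K1 by simp
  next
    case False
    have "\<bar>G j $ k\<bar> / \<bar>G j $ j\<bar> \<in> {\<bar>g $ i\<bar> / \<bar>g $ j\<bar> | g i j. elementary A g \<and> i \<in> supp_vec g \<and> j \<in> supp_vec g}"
    proof (intro CollectI exI conjI)
      show "\<bar>G j $ k\<bar> / \<bar>G j $ j\<bar> = \<bar>G j $ k\<bar> / \<bar>G j $ j\<bar>" by (rule refl)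
      show "elementary A (G j)" by (rule Gel[OF j])
      show "k \<in> supp_vec (G j)" using False by (simp add: supp_vec_def)
      show "j \<in> supp_vec (G j)" using G1[OF j] by (simp add: supp_vec_def)
    qed
    hence "\<bar>G j $ k\<bar> / \<bar>G j $ j\<bar> \<le> K" unfolding K_def circuit_imbalance_def
      by (intro cSup_upper[OF _ bdd]) simp
    thus ?thesis using G1[OF j] by simp
  qed
  define y where "y = z - (\<Sum>j\<in>-B. z $ j *s G j)"
  have Ay: "A *v y = b"
    using assms(3) G0 by (simp add: y_def matrix_vector_mult_diff_distrib vec.sum vec.scale)
  have yB: "\<forall>i. i \<notin> B \<longrightarrow> y $ i = 0"
  proof (intro allI impI)
    fix i assume i: "i \<notin> B"
    have "(\<Sum>j\<in>-B. z $ j * G j $ i) = (\<Sum>j\<in>-B. if j = i then z $ i else 0)"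
      by (rule sum.cong) (use G1 G2 i in auto)
    also have "\<dots> = z $ i" using i by simp
    finally show "y $ i = 0" by (simp add: y_def sum_component)
  qed
  have "A *v (x - y) = 0" using Ax Ay by (simp add: matrix_vector_mult_diff_distrib)
  moreover have "\<forall>i. i \<notin> B \<longrightarrow> (x - y) $ i = 0" using xB yB by simp
  ultimately have "x - y = 0" using inj_on_B[OF inj ind] by blast
  hence xy: "x = y" by simp
  have bnd: "\<bar>x $ k\<bar> \<le> K * norm_one z" for k
  proof (cases "k \<in> B")
    case False
    have "0 \<le> norm_one z" unfolding norm_one_def by (simp add: sum_nonneg)
    thus ?thesis using False xB K1 by simp
  next
    case True
    have "x $ k = z $ k - (\<Sum>j\<in>-B. z $ j * G j $ k)"
      by (simp add: xy y_def sum_component)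
    hence "\<bar>x $ k\<bar> \<le> \<bar>z $ k\<bar> + \<bar>\<Sum>j\<in>-B. z $ j * G j $ k\<bar>" by linarith
    also have "\<dots> \<le> \<bar>z $ k\<bar> + (\<Sum>j\<in>-B. \<bar>z $ j * G j $ k\<bar>)" by (simp add: sum_abs)
    also have "\<dots> \<le> K * \<bar>z $ k\<bar> + (\<Sum>j\<in>-B. K * \<bar>z $ j\<bar>)"
    proof (intro add_mono sum_mono)
      show "\<bar>z $ k\<bar> \<le> K * \<bar>z $ k\<bar>" using K1 by (simp add: mult_le_cancel_right1)
      fix j assume "j \<in> -B"
      thus "\<bar>z $ j * G j $ k\<bar> \<le> K * \<bar>z $ j\<bar>"
        using Gb[of j k] by (simp add: abs_mult mult.commute[of K] mult_left_mono)
    qed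
    also have "\<dots> = K * (\<Sum>j\<in>insert k (-B). \<bar>z $ j\<bar>)"
      using True by (simp add: sum_distrib_left distrib_left)
    also have "\<dots> \<le> K * norm_one z" unfolding norm_one_def
      using K1 by (intro mult_left_mono sum_mono2) auto
    finally show ?thesis .
  qed
  show ?thesis unfolding norm_inf_def K_def[symmetric]
    using bnd by (intro Max.boundedI) auto
qed

end
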